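(* Let $F$ be a forest and $t$ a positive constant. Then there exists a matching $M$ of $F$ such that the threshold assignment $\tau$ defined by $\tau(w)=deg_F(w)$ if $w$ is saturated by $M$ and $\tau(w)=0$ otherwise satisfies $\overline{\tau}\le t$ and $Ldyn_t(F)=dyn_\tau(F)=|M|$.
   Context: A threshold assignment is a function $\tau:V(F)\to\{0,1,2,\dots\}$ with $\tau(v)\le deg_F(v)$ for every $v$; $\overline{\tau}=\sum_v\tau(v)/|V(F)|$. A set $D\subseteq V(F)$ is a $\tau$-dynamo if $V(F)$ can be partitioned into $D_0=D,D_1,\dots,D_k$ such that for each $1\le i\le k$, $D_i$ consists of all vertices not in $D_0\cup\dots\cup D_{i-1}$ having at least $\tau(v)$ neighbors in $D_0\cup\dots\cup D_{i-1}$; $dyn_\tau(F)$ is the minimum size of a $\tau$-dynamo. $Ldyn_t(F)=\max\{dyn_\tau(F):\overline{\tau}\le t\}$. *)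

theory Defs
  imports Complex_Main
begin

definition simple_graph :: "'a set \<Rightarrow> 'a set set \<Rightarrow> bool" where
  "simple_graph V E \<longleftrightarrow> finite V \<and>
     (\<forall>e\<in>E. \<exists>u v. e = {u, v} \<and> u \<noteq> v \<and> u \<in> V \<and> v \<in> V)"

definition is_cycle :: "'a set \<Rightarrow> 'a set set \<Rightarrow> 'a list \<Rightarrow> bool" where
  "is_cycle V E cs \<longleftrightarrow> length cs \<ge> 3 \<and> distinct cs \<and> set cs \<subseteq> V \<and>
     (\<forall>i < length cs. {cs ! i, cs ! ((i + 1) mod length cs)} \<in> E)"

definition forest :: "'a set \<Rightarrow> 'a set set \<Rightarrow> bool" where
  "forest V E \<longleftrightarrow> simple_graph V E \<and> (\<nexists>cs. is_cycle V E cs)"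

definition degree :: "'a set set \<Rightarrow> 'a \<Rightarrow> nat" where
  "degree E v = card {u. {u, v} \<in> E}"

definition matching :: "'a set set \<Rightarrow> 'a set set \<Rightarrow> bool" where
  "matching E M \<longleftrightarrow> M \<subseteq> E \<and> (\<forall>e1\<in>M. \<forall>e2\<in>M. e1 \<noteq> e2 \<longrightarrow> e1 \<inter> e2 = {})"

definition threshold_assignment :: "'a set \<Rightarrow> 'a set set \<Rightarrow> ('a \<Rightarrow> nat) \<Rightarrow> bool" where
  "threshold_assignment V E \<tau> \<longleftrightarrow> (\<forall>v\<in>V. \<tau> v \<le> degree E v)"

definition avg_threshold :: "'a set \<Rightarrow> ('a \<Rightarrow> nat) \<Rightarrow> real" where
  "avg_threshold V \<tau> = real (\<Sum>v\<in>V. \<tau> v) / real (card V)"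

definition spread_step :: "'a set \<Rightarrow> 'a set set \<Rightarrow> ('a \<Rightarrow> nat) \<Rightarrow> 'a set \<Rightarrow> 'a set" where
  "spread_step V E \<tau> S = S \<union> {v \<in> V - S. card {u \<in> S. {u, v} \<in> E} \<ge> \<tau> v}"

definition is_dynamo :: "'a set \<Rightarrow> 'a set set \<Rightarrow> ('a \<Rightarrow> nat) \<Rightarrow> 'a set \<Rightarrow> bool" where
  "is_dynamo V E \<tau> D \<longleftrightarrow> D \<subseteq> V \<and> (\<exists>k. (spread_step V E \<tau> ^^ k) D = V)"

definition dyn :: "'a set \<Rightarrow> 'a set set \<Rightarrow> ('a \<Rightarrow> nat) \<Rightarrow> nat" where
  "dyn V E \<tau> = Min {card D | D. is_dynamo V E \<tau> D}"

definition Ldyn :: "'a set \<Rightarrow> 'a set set \<Rightarrow> real \<Rightarrow> nat" where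
  "Ldyn V E t = Max {dyn V E \<tau> | \<tau>. threshold_assignment V E \<tau> \<and> avg_threshold V \<tau> \<le> t}"

end

theory Submission
  imports Defs
begin


lemma sg_edge: "simple_graph V E \<Longrightarrow> {u,v} \<in> E \<Longrightarrow> u \<noteq> v \<and> u \<in> V \<and> v \<in> V"
proof -
  assume s: "simple_graph V E" and e: "{u,v} \<in> E"
  then obtain a b where "{u,v} = {a,b}" "a \<noteq> b" "a \<in> V" "b \<in> V"
    unfolding simple_graph_def by blast
  thus ?thesis by (auto simp: doubleton_eq_iff)
qed

lemma sg_edge_sub: "simple_graph V E \<Longrightarrow> e \<in> E \<Longrightarrow> e \<subseteq> V"
proof -
  assume "simple_graph V E" "e \<in> E"
  then obtain u v where "e = {u,v}" "u \<in> V" "v \<in> V" unfolding simple_graph_def by blast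
  thus ?thesis by simp
qed

lemma sg_finE: "simple_graph V E \<Longrightarrow> finite E"
proof -
  assume s: "simple_graph V E"
  hence "E \<subseteq> Pow V" using sg_edge_sub by blast
  moreover have "finite V" using s simple_graph_def by blast
  ultimately show ?thesis using finite_subset by (metis finite_Pow_iff)
qed

lemma nbrs_sub: "simple_graph V E \<Longrightarrow> {u. {u,v} \<in> E} \<subseteq> V"
proof
  fix u assume "simple_graph V E" "u \<in> {u. {u,v} \<in> E}"
  thus "u \<in> V" using sg_edge[of V E u v] by simp
qed

lemma nbrs_fin: "simple_graph V E \<Longrightarrow> finite {u. {u,v} \<in> E}"
proof -
  assume sg: "simple_graph V E"
  hence "finite V" using simple_graph_def by blast
  thus ?thesis by (rule finite_subset[OF nbrs_sub[OF sg]])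
qed

lemma nbrs_fin2: "simple_graph V E \<Longrightarrow> finite {u\<in>S. {u,v} \<in> E}"
  by (rule finite_subset[OF _ nbrs_fin[of V E v]]) auto

lemma spread_in: "v \<in> V \<Longrightarrow> \<tau> v \<le> card {u\<in>T. {u,v} \<in> E} \<Longrightarrow> v \<in> spread_step V E \<tau> T"
  unfolding spread_step_def by blast

abbreviation Sk where "Sk V E \<tau> D k \<equiv> (spread_step V E \<tau> ^^ k) D"

lemma S_mono_Suc: "Sk V E \<tau> D k \<subseteq> Sk V E \<tau> D (Suc k)"
  by (simp add: spread_step_def)

lemma S_mono: "j \<le> k \<Longrightarrow> Sk V E \<tau> D j \<subseteq> Sk V E \<tau> D k"
proof (induction k)
  case 0 thus ?case by simp
next
  case (Suc k)
  show ?case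
  proof (cases "j = Suc k")
    case True thus ?thesis by simp
  next
    case False
    hence "j \<le> k" using Suc.prems by simp
    thus ?thesis using Suc.IH S_mono_Suc[where k=k and V=V and E=E and \<tau>=\<tau> and D=D] by blast
  qed
qed

lemma S_sub: "D \<subseteq> V \<Longrightarrow> Sk V E \<tau> D k \<subseteq> V"
proof (induction k)
  case 0 thus ?case by simp
next
  case (Suc k)
  have "spread_step V E \<tau> (Sk V E \<tau> D k) \<subseteq> V" using Suc unfolding spread_step_def by blast
  thus ?case by simp
qed

definition R where "R V E \<tau> D = (\<Union>k. Sk V E \<tau> D k)"

lemma R_base: "D \<subseteq> R V E \<tau> D"
proof
  fix x assume "x \<in> D"
  hence "x \<in> Sk V E \<tau> D 0" by simp
  thus "x \<in> R V E \<tau> D" unfolding R_def by blast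
qed

lemma fin_in_S: "finite B \<Longrightarrow> B \<subseteq> R V E \<tau> D \<Longrightarrow> \<exists>K. B \<subseteq> Sk V E \<tau> D K"
proof (induction B rule: finite_induct)
  case empty thus ?case by auto
next
  case (insert b B)
  then obtain K where K: "B \<subseteq> Sk V E \<tau> D K" by auto
  from insert obtain j where j: "b \<in> Sk V E \<tau> D j" unfolding R_def by auto
  have "B \<subseteq> Sk V E \<tau> D (max K j)" using K S_mono[where j=K and k="max K j" and V=V and E=E and \<tau>=\<tau> and D=D] by auto
  moreover have "b \<in> Sk V E \<tau> D (max K j)" using j S_mono[where j=j and k="max K j" and V=V and E=E and \<tau>=\<tau> and D=D] by auto
  ultimately show ?case by blast
qed

lemma R_closed:
  assumes sg: "simple_graph V E" and w: "w \<in> V" and c: "\<tau> w \<le> card {u \<in> R V E \<tau> D. {u,w} \<in> E}"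
  shows "w \<in> R V E \<tau> D"
proof -
  let ?N = "{u \<in> R V E \<tau> D. {u,w} \<in> E}"
  have "finite ?N" using nbrs_fin2[OF sg] .
  then obtain K where K: "?N \<subseteq> Sk V E \<tau> D K" using fin_in_S[of ?N] by blast
  have "?N \<subseteq> {u \<in> Sk V E \<tau> D K. {u,w} \<in> E}" using K by blast
  hence "card ?N \<le> card {u \<in> Sk V E \<tau> D K. {u,w} \<in> E}"
    by (intro card_mono nbrs_fin2[OF sg])
  hence le: "\<tau> w \<le> card {u \<in> Sk V E \<tau> D K. {u,w} \<in> E}" using c by linarith
  have "w \<in> spread_step V E \<tau> (Sk V E \<tau> D K)"
    by (rule spread_in[where T="Sk V E \<tau> D K" and V=V and E=E and \<tau>=\<tau> and v=w, OF w le])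
  hence "w \<in> Sk V E \<tau> D (Suc K)" by simp
  thus ?thesis unfolding R_def by blast
qed

lemma R_dynamo:
  assumes sg: "simple_graph V E" and "D \<subseteq> V" and "V \<subseteq> R V E \<tau> D"
  shows "is_dynamo V E \<tau> D"
proof -
  have "finite V" using sg simple_graph_def by blast
  then obtain K where "V \<subseteq> Sk V E \<tau> D K" using fin_in_S[OF _ assms(3)] by blast
  moreover have "Sk V E \<tau> D K \<subseteq> V" using S_sub assms by blast
  ultimately show ?thesis unfolding is_dynamo_def using assms by blast
qed

lemma dynamo_R: "is_dynamo V E \<tau> D \<Longrightarrow> V \<subseteq> R V E \<tau> D"
  unfolding is_dynamo_def R_def by blast



definition del :: "'a set set \<Rightarrow> 'a set \<Rightarrow> 'a set set" where
  "del E X = {e \<in> E. e \<inter> X = {}}"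

definition cX :: "'a set set \<Rightarrow> 'a set \<Rightarrow> 'a \<Rightarrow> nat" where
  "cX E X w = card {x \<in> X. {x,w} \<in> E}"

lemma del_sub: "del E X \<subseteq> E" unfolding del_def by auto

lemma l1: "({u,w} \<inter> X = {}) = (u \<notin> X \<and> w \<notin> X)" by auto

lemma del_edge: "w \<notin> X \<Longrightarrow> ({u,w} \<in> del E X) = ({u,w} \<in> E \<and> u \<notin> X)"
  unfolding del_def by (simp add: l1)

lemma degree_del:
  assumes sg: "simple_graph V E" and w: "w \<notin> X"
  shows "degree E w = degree (del E X) w + cX E X w"
proof -
  have eq: "{u. {u,w} \<in> E} = {u. {u,w} \<in> del E X} \<union> {x \<in> X. {x,w} \<in> E}"
    using w by (auto simp: del_edge)
  have f1: "finite {u. {u,w} \<in> del E X}"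
    by (rule finite_subset[OF _ nbrs_fin[OF sg, of w]]) (auto simp: del_def)
  have f2: "finite {x \<in> X. {x,w} \<in> E}" using nbrs_fin2[OF sg] .
  have "degree E w = card ({u. {u,w} \<in> del E X} \<union> {x \<in> X. {x,w} \<in> E})"
    unfolding degree_def by (simp only: eq)
  also have "\<dots> = card {u. {u,w} \<in> del E X} + card {x \<in> X. {x,w} \<in> E}"
  proof (rule card_Un_disjoint[OF f1 f2])
    show "{u. {u,w} \<in> del E X} \<inter> {x \<in> X. {x,w} \<in> E} = {}"
      using w by (auto simp: del_edge)
  qed
  finally show ?thesis unfolding degree_def cX_def .
qed

lemma sg_del: "simple_graph V E \<Longrightarrow> simple_graph (V - X) (del E X)"
proof -
  assume sg: "simple_graph V E"
  have "finite (V - X)" using sg simple_graph_def by auto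
  moreover have "\<exists>u v. e = {u, v} \<and> u \<noteq> v \<and> u \<in> V - X \<and> v \<in> V - X" if e: "e \<in> del E X" for e
  proof -
    have eE: "e \<in> E" and eX: "e \<inter> X = {}" using e unfolding del_def by auto
    then obtain u v where "e = {u,v}" "u \<noteq> v" "u \<in> V" "v \<in> V" using sg unfolding simple_graph_def by meson
    thus ?thesis using eX by auto
  qed
  ultimately show ?thesis unfolding simple_graph_def by auto
qed

lemma cycle_mono: "is_cycle V' E' cs \<Longrightarrow> V' \<subseteq> V \<Longrightarrow> E' \<subseteq> E \<Longrightarrow> is_cycle V E cs"
  unfolding is_cycle_def by (meson subset_iff subset_trans)

lemma forest_del: "forest V E \<Longrightarrow> forest (V - X) (del E X)"
proof -
  assume f: "forest V E"
  have "simple_graph (V - X) (del E X)" using f sg_del unfolding forest_def by auto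
  moreover have "\<nexists>cs. is_cycle (V - X) (del E X) cs"
    using f cycle_mono[OF _ Diff_subset del_sub] unfolding forest_def by metis
  ultimately show ?thesis unfolding forest_def by auto
qed

lemma matching_del: "matching (del E X) M \<Longrightarrow> matching E M"
  unfolding matching_def using del_sub by (meson subset_trans)

lemma matching_Union: "simple_graph V E \<Longrightarrow> matching (del E X) M \<Longrightarrow> \<Union>M \<subseteq> V - X"
proof
  assume sg: "simple_graph V E" and m: "matching (del E X) M"
  fix x assume "x \<in> \<Union>M"
  then obtain e where e: "e \<in> M" "x \<in> e" by auto
  hence ed: "e \<in> del E X" using m matching_def by auto
  hence "e \<in> E" "e \<inter> X = {}" unfolding del_def by auto
  thus "x \<in> V - X" using e sg_edge_sub[OF sg] by auto
qed

definition path where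
  "path V E xs \<longleftrightarrow> xs \<noteq> [] \<and> distinct xs \<and> set xs \<subseteq> V \<and>
     (\<forall>i. Suc i < length xs \<longrightarrow> {xs ! i, xs ! Suc i} \<in> E)"

lemma path_extend:
  assumes f: "forest V E" and p: "path V E xs" and d: "\<forall>v\<in>V. degree E v \<ge> 2"
  shows "\<exists>ys. path V E ys \<and> length ys = Suc (length xs)"
proof -
  have sg: "simple_graph V E" using f unfolding forest_def by blast
  let ?x = "xs ! 0"
  have xV: "?x \<in> V" using p unfolding path_def by (metis nth_mem subsetD length_greater_0_conv)
  let ?N = "{u. {u,?x} \<in> E}"
  have cN: "card ?N \<ge> 2" using d xV degree_def by metis
  have "\<exists>y\<in>?N. length xs \<ge> 2 \<longrightarrow> y \<noteq> xs ! 1"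
  proof (rule ccontr)
    assume "\<not> ?thesis"
    hence "?N \<subseteq> {xs ! 1}" by auto
    hence "card ?N \<le> card {xs ! 1}" by (intro card_mono) auto
    hence "card ?N \<le> 1" by simp
    thus False using cN by simp
  qed
  then obtain y where yN: "{y, ?x} \<in> E" and y1: "length xs \<ge> 2 \<longrightarrow> y \<noteq> xs ! 1" by auto
  have yx: "y \<noteq> ?x" and yV: "y \<in> V" using sg_edge[OF sg yN] by auto
  show ?thesis
  proof (cases "y \<in> set xs")
    case False
    have "path V E (y # xs)" unfolding path_def
    proof (intro conjI allI impI)
      show "distinct (y # xs)" using False p unfolding path_def by auto
      show "set (y # xs) \<subseteq> V" using yV p unfolding path_def by auto
      fix i assume i: "Suc i < length (y # xs)"
      show "{(y # xs) ! i, (y # xs) ! Suc i} \<in> E"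
      proof (cases i)
        case 0 thus ?thesis using yN by simp
      next
        case (Suc j) thus ?thesis using p i unfolding path_def by auto
      qed
    qed simp
    thus ?thesis by auto
  next
    case True
    then obtain i where i: "i < length xs" "xs ! i = y" by (metis in_set_conv_nth)
    have i0: "i \<noteq> 0" using i yx by (metis)
    have i1: "i \<noteq> 1" using i y1 by auto
    let ?cs = "take (Suc i) xs"
    have lcs: "length ?cs = Suc i" using i by simp
    have "is_cycle V E ?cs" unfolding is_cycle_def
    proof (intro conjI allI impI)
      show "3 \<le> length ?cs" using lcs i0 i1 by simp
      show "distinct ?cs" using p unfolding path_def by auto
      show "set ?cs \<subseteq> V" using p unfolding path_def by (meson set_take_subset subset_trans)
      fix j assume j: "j < length ?cs"
      show "{?cs ! j, ?cs ! ((j + 1) mod length ?cs)} \<in> E"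
      proof (cases "j = i")
        case True
        hence "(j+1) mod length ?cs = 0" using lcs by simp
        thus ?thesis using True yN i lcs by (simp add: insert_commute)
      next
        case False
        hence jj: "j + 1 < length ?cs" using j lcs by simp
        hence "(j+1) mod length ?cs = j + 1" by simp
        moreover have "Suc j < length xs" using jj i by simp
        ultimately show ?thesis using p jj unfolding path_def by simp
      qed
    qed
    thus ?thesis using f unfolding forest_def by blast
  qed
qed

lemma leaf_exists:
  assumes f: "forest V E" and ne: "V \<noteq> {}" and d: "\<forall>v\<in>V. degree E v \<ge> 1"
  shows "\<exists>v\<in>V. degree E v = 1"
proof (rule ccontr)
  assume "\<not> ?thesis"
  hence d2: "\<forall>v\<in>V. degree E v \<ge> 2" using d by (metis One_nat_def Suc_1 Suc_le_eq le_neq_implies_less)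
  have fin: "finite V" using f forest_def simple_graph_def by blast
  obtain v where v: "v \<in> V" using ne by blast
  have "\<exists>xs. path V E xs \<and> length xs = Suc n" for n
  proof (induction n)
    case 0
    have "path V E [v]" using v unfolding path_def by simp
    thus ?case by auto
  next
    case (Suc n) thus ?case using path_extend[OF f _ d2] by metis
  qed
  then obtain xs where xs: "path V E xs" "length xs = Suc (card V)" by blast
  have "card (set xs) = length xs" using xs distinct_card unfolding path_def by blast
  moreover have "card (set xs) \<le> card V" using xs card_mono[OF fin] unfolding path_def by metis
  ultimately show False using xs by simp
qed



lemma spread_cases: "w \<in> spread_step V E \<tau> T \<Longrightarrow> w \<in> T \<or> (w \<in> V \<and> w \<notin> T \<and> \<tau> w \<le> card {u\<in>T. {u,w} \<in> E})"
  unfolding spread_step_def by auto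

lemma sim:
  assumes sg: "simple_graph V E" and E'E: "E' \<subseteq> E" and V'V: "V' \<subseteq> V"
  and dyn': "is_dynamo V' E' \<tau>' D'" and DD: "D' \<subseteq> D"
  and AR: "A \<subseteq> R V E \<tau> D" and AV: "A \<inter> V' = {}"
  and th: "\<forall>w\<in>V'. \<tau> w \<le> \<tau>' w + card {x\<in>A. {x,w} \<in> E}"
  shows "V' \<subseteq> R V E \<tau> D"
proof -
  have D'V: "D' \<subseteq> V'" using dyn' unfolding is_dynamo_def by auto
  have "Sk V' E' \<tau>' D' k \<subseteq> R V E \<tau> D" for k
  proof (induction k)
    case 0 thus ?case using DD R_base[of D V E \<tau>] by auto
  next
    case (Suc k)
    let ?T = "Sk V' E' \<tau>' D' k"
    have TV: "?T \<subseteq> V'" using S_sub[OF D'V] .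
    have "spread_step V' E' \<tau>' ?T \<subseteq> R V E \<tau> D"
    proof
      fix w assume "w \<in> spread_step V' E' \<tau>' ?T"
      hence "w \<in> ?T \<or> (w \<in> V' \<and> w \<notin> ?T \<and> \<tau>' w \<le> card {u\<in>?T. {u,w} \<in> E'})"
        by (rule spread_cases)
      thus "w \<in> R V E \<tau> D"
      proof
        assume "w \<in> ?T" thus ?thesis using Suc.IH by auto
      next
        assume h: "w \<in> V' \<and> w \<notin> ?T \<and> \<tau>' w \<le> card {u\<in>?T. {u,w} \<in> E'}"
        have wV: "w \<in> V" using h V'V by auto
        let ?P = "{u\<in>?T. {u,w} \<in> E'}"
        let ?Q = "{x\<in>A. {x,w} \<in> E}"
        have sub: "?P \<union> ?Q \<subseteq> {u \<in> R V E \<tau> D. {u,w} \<in> E}"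
          using Suc.IH E'E AR by auto
        have disj: "?P \<inter> ?Q = {}" using TV AV by auto
        have fP: "finite ?P"
          by (rule finite_subset[OF _ nbrs_fin2[OF sg, of ?T w]]) (use E'E in auto)
        have fQ: "finite ?Q" using nbrs_fin2[OF sg] .
        have "card ?P + card ?Q = card (?P \<union> ?Q)" using card_Un_disjoint[OF fP fQ disj] by simp
        also have "\<dots> \<le> card {u \<in> R V E \<tau> D. {u,w} \<in> E}" by (rule card_mono[OF nbrs_fin2[OF sg] sub])
        finally have "\<tau> w \<le> card {u \<in> R V E \<tau> D. {u,w} \<in> E}" using th h by fastforce
        thus ?thesis using R_closed[OF sg wV] by auto
      qed
    qed
    thus ?case by simp
  qed
  moreover obtain k where "Sk V' E' \<tau>' D' k = V'" using dyn' unfolding is_dynamo_def by auto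
  ultimately show ?thesis by metis
qed

lemma acc:
  assumes sg: "simple_graph V E" and U: "U \<subseteq> V - X"
  and h1: "(\<Sum>w\<in>U. degree (del E X) w) \<le> (\<Sum>w\<in>V-X. \<tau> w - cX E X w)"
  and h2: "\<forall>w\<in>U. 1 \<le> \<tau> w - cX E X w"
  shows "(\<Sum>w\<in>U. degree E w) \<le> (\<Sum>w\<in>V-X. \<tau> w)"
proof -
  have fin: "finite (V - X)" using sg unfolding simple_graph_def by auto
  have fU: "finite U" using finite_subset[OF U fin] .
  have "(\<Sum>w\<in>U. degree E w) = (\<Sum>w\<in>U. degree (del E X) w + cX E X w)"
    using U degree_del[OF sg] by (intro sum.cong) auto
  also have "\<dots> = (\<Sum>w\<in>U. degree (del E X) w) + (\<Sum>w\<in>U. cX E X w)" by (rule sum.distrib)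
  also have "\<dots> \<le> (\<Sum>w\<in>V-X. \<tau> w - cX E X w) + (\<Sum>w\<in>U. cX E X w)" using h1 by simp
  also have "(\<Sum>w\<in>V-X. \<tau> w - cX E X w) = (\<Sum>w\<in>(V-X)-U. \<tau> w - cX E X w) + (\<Sum>w\<in>U. \<tau> w - cX E X w)"
    by (rule sum.subset_diff[OF U fin])
  also have "(\<Sum>w\<in>(V-X)-U. \<tau> w - cX E X w) + (\<Sum>w\<in>U. \<tau> w - cX E X w) + (\<Sum>w\<in>U. cX E X w)
      = (\<Sum>w\<in>(V-X)-U. \<tau> w - cX E X w) + (\<Sum>w\<in>U. \<tau> w - cX E X w + cX E X w)"
    by (simp add: sum.distrib)
  also have "(\<Sum>w\<in>U. \<tau> w - cX E X w + cX E X w) = (\<Sum>w\<in>U. \<tau> w)"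
    using h2 by (intro sum.cong) auto
  also have "(\<Sum>w\<in>(V-X)-U. \<tau> w - cX E X w) \<le> (\<Sum>w\<in>(V-X)-U. \<tau> w)"
    by (intro sum_mono) auto
  also have "(\<Sum>w\<in>(V-X)-U. \<tau> w) + (\<Sum>w\<in>U. \<tau> w) = (\<Sum>w\<in>V-X. \<tau> w)"
    by (rule sum.subset_diff[OF U fin, symmetric])
  finally show ?thesis by simp
qed



lemma cX_le1: "cX E {v} w \<le> 1"
  unfolding cX_def by (rule order_trans[OF card_mono[of "{v}"]]) auto

lemma cX_leaf:
  assumes "{u. {u,v} \<in> E} = {u}" and "w \<noteq> u"
  shows "cX E {v} w = 0"
proof -
  have "{x \<in> {v}. {x,w} \<in> E} = {}"
  proof (rule ccontr)
    assume "{x \<in> {v}. {x,w} \<in> E} \<noteq> {}"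
    hence "{v,w} \<in> E" by auto
    hence "{w,v} \<in> E" by (simp add: insert_commute)
    hence "w \<in> {u. {u,v} \<in> E}" by simp
    thus False using assms by auto
  qed
  thus ?thesis unfolding cX_def by simp
qed

lemma UB:
  "forest V E \<Longrightarrow> \<forall>v\<in>V. \<tau> v \<le> degree E v \<Longrightarrow>
   \<exists>M D. matching E M \<and> is_dynamo V E \<tau> D \<and> card D \<le> card M \<and>
     (\<Sum>w\<in>\<Union>M. degree E w) \<le> (\<Sum>v\<in>V. \<tau> v) \<and> (\<forall>w\<in>\<Union>M. 1 \<le> \<tau> w)"
proof (induction "card V" arbitrary: V E \<tau> rule: less_induct)
  case less
  have f: "forest V E" and thr: "\<forall>v\<in>V. \<tau> v \<le> degree E v" using less.prems by auto
  have sg: "simple_graph V E" using f unfolding forest_def by auto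
  have fin: "finite V" using sg unfolding simple_graph_def by auto
  have finE: "finite E" using sg_finE[OF sg] .
  show ?case
  proof (cases "V = {}")
    case True
    have "is_dynamo V E \<tau> {}" unfolding is_dynamo_def using True by (auto intro: exI[of _ 0])
    moreover have "matching E {}" unfolding matching_def by auto
    ultimately show ?thesis by (intro exI[of _ "{}"]) auto
  next
    case Vne: False
    show ?thesis
    proof (cases "\<exists>z\<in>V. \<tau> z = 0")
      case True
      then obtain z where z: "z \<in> V" "\<tau> z = 0" by auto
      let ?X = "{z}"
      let ?V' = "V - ?X" let ?E' = "del E ?X" let ?t' = "\<lambda>w. \<tau> w - cX E ?X w"
      have lt: "card ?V' < card V" using z fin by (meson card_Diff1_less)
      have f': "forest ?V' ?E'" by (rule forest_del[OF f])
      have thr': "\<forall>w\<in>?V'. ?t' w \<le> degree ?E' w"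
      proof
        fix w assume w: "w \<in> ?V'"
        hence "degree E w = degree ?E' w + cX E ?X w" using degree_del[OF sg] by auto
        thus "?t' w \<le> degree ?E' w" using thr w by auto
      qed
      obtain M D where MD: "matching ?E' M" "is_dynamo ?V' ?E' ?t' D" "card D \<le> card M"
        "(\<Sum>w\<in>\<Union>M. degree ?E' w) \<le> (\<Sum>v\<in>?V'. ?t' v)" "\<forall>w\<in>\<Union>M. 1 \<le> ?t' w"
        using less.hyps[OF lt f' thr'] by blast
      have DV: "D \<subseteq> ?V'" using MD(2) unfolding is_dynamo_def by auto
      have zR: "z \<in> R V E \<tau> D" using R_closed[OF sg z(1)] z(2) by auto
      have "?V' \<subseteq> R V E \<tau> D"
        by (rule sim[OF sg del_sub Diff_subset MD(2) order_refl, of ?X]) (use zR in \<open>auto simp: cX_def\<close>)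
      hence VR: "V \<subseteq> R V E \<tau> D" using zR by auto
      have dyn: "is_dynamo V E \<tau> D" by (rule R_dynamo[OF sg _ VR]) (use DV in auto)
      have U: "\<Union>M \<subseteq> ?V'" by (rule matching_Union[OF sg MD(1)])
      have "(\<Sum>w\<in>\<Union>M. degree E w) \<le> (\<Sum>w\<in>?V'. \<tau> w)" by (rule acc[OF sg U MD(4) MD(5)])
      also have "\<dots> \<le> (\<Sum>w\<in>V. \<tau> w)" by (rule sum_mono2[OF fin]) auto
      finally have s: "(\<Sum>w\<in>\<Union>M. degree E w) \<le> (\<Sum>w\<in>V. \<tau> w)" .
      have inv: "\<forall>w\<in>\<Union>M. 1 \<le> \<tau> w"
      proof
        fix w assume "w \<in> \<Union>M"
        hence "1 \<le> ?t' w" using MD(5) by auto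
        thus "1 \<le> \<tau> w" by linarith
      qed
      show ?thesis
        by (rule exI[of _ M], rule exI[of _ D]) (use matching_del[OF MD(1)] dyn MD(3) s inv in auto)
    next
      case False
      hence t1: "\<forall>z\<in>V. 1 \<le> \<tau> z" by (simp add: Suc_le_eq)
      hence "\<forall>z\<in>V. 1 \<le> degree E z" using thr by (meson order_trans)
      then obtain v where v: "v \<in> V" "degree E v = 1" using leaf_exists[OF f Vne] by blast
      have tv: "\<tau> v = 1" using t1 thr v by (metis le_antisym)
      have "card {u. {u,v} \<in> E} = 1" using v unfolding degree_def by simp
      then obtain u where Nv: "{u. {u,v} \<in> E} = {u}" using card_1_singletonE by metis
      have uv: "{u,v} \<in> E" using Nv by auto
      have unv: "u \<noteq> v" and uV: "u \<in> V" using sg_edge[OF sg uv] by auto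
      show ?thesis
      proof (cases "\<tau> u = degree E u")
        case True
        let ?X = "{u,v}"
        let ?V' = "V - ?X" let ?E' = "del E ?X" let ?t' = "\<lambda>w. \<tau> w - cX E ?X w"
        have lt: "card ?V' < card V" using uV fin by (intro psubset_card_mono) auto
        have f': "forest ?V' ?E'" by (rule forest_del[OF f])
        have thr': "\<forall>w\<in>?V'. ?t' w \<le> degree ?E' w"
        proof
          fix w assume w: "w \<in> ?V'"
          hence "degree E w = degree ?E' w + cX E ?X w" using degree_del[OF sg] by auto
          thus "?t' w \<le> degree ?E' w" using thr w by auto
        qed
        obtain M D where MD: "matching ?E' M" "is_dynamo ?V' ?E' ?t' D" "card D \<le> card M"
          "(\<Sum>w\<in>\<Union>M. degree ?E' w) \<le> (\<Sum>v\<in>?V'. ?t' v)" "\<forall>w\<in>\<Union>M. 1 \<le> ?t' w"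
          using less.hyps[OF lt f' thr'] by blast
        have DV: "D \<subseteq> ?V'" using MD(2) unfolding is_dynamo_def by auto
        let ?D = "insert u D"
        have uR: "u \<in> R V E \<tau> ?D" using R_base[of ?D V E \<tau>] by auto
        have "{u} \<subseteq> {x \<in> R V E \<tau> ?D. {x,v} \<in> E}" using uR uv by auto
        hence "card {u} \<le> card {x \<in> R V E \<tau> ?D. {x,v} \<in> E}" by (intro card_mono nbrs_fin2[OF sg])
        hence "\<tau> v \<le> card {x \<in> R V E \<tau> ?D. {x,v} \<in> E}" using tv by simp
        hence vR: "v \<in> R V E \<tau> ?D" using R_closed[OF sg v(1)] by auto
        have "?V' \<subseteq> R V E \<tau> ?D"
          by (rule sim[OF sg del_sub Diff_subset MD(2), of ?D ?X]) (use uR vR in \<open>auto simp: cX_def\<close>)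
        hence VR: "V \<subseteq> R V E \<tau> ?D" using uR vR by auto
        have dyn: "is_dynamo V E \<tau> ?D" by (rule R_dynamo[OF sg _ VR]) (use DV uV in auto)
        have U: "\<Union>M \<subseteq> ?V'" by (rule matching_Union[OF sg MD(1)])
        have MdE: "M \<subseteq> del E ?X" using MD(1) unfolding matching_def by auto
        have finM: "finite M" using finite_subset[OF MdE finite_subset[OF del_sub finE]] .
        have nin: "{u,v} \<notin> M" using MdE unfolding del_def by auto
        let ?M = "insert {u,v} M"
        have mat: "matching E ?M"
          unfolding matching_def
        proof (intro conjI ballI impI)
          show "?M \<subseteq> E" using uv MdE del_sub by auto
          fix e1 e2 assume e1: "e1 \<in> ?M" and e2: "e2 \<in> ?M" and ne: "e1 \<noteq> e2"
          show "e1 \<inter> e2 = {}"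
          proof (cases "e1 = {u,v}")
            case True
            hence "e2 \<in> M" using e2 ne by auto
            hence "e2 \<inter> ?X = {}" using MdE unfolding del_def by auto
            thus ?thesis using True by auto
          next
            case F1: False
            hence e1M: "e1 \<in> M" using e1 by auto
            show ?thesis
            proof (cases "e2 = {u,v}")
              case True
              have "e1 \<inter> ?X = {}" using e1M MdE unfolding del_def by auto
              thus ?thesis using True by auto
            next
              case False
              hence "e2 \<in> M" using e2 by auto
              thus ?thesis using e1M ne MD(1) unfolding matching_def by auto
            qed
          qed
        qed
        have cM: "card ?M = Suc (card M)" using finM nin by simp
        have finD: "finite D" using finite_subset[OF DV] fin by auto
        have cD: "card ?D \<le> Suc (card D)" using finD by (simp add: card_insert_if)
        have UM: "\<Union>?M = ?X \<union> \<Union>M" by auto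
        have finU: "finite (\<Union>M)" using finite_subset[OF U] fin by auto
        have "(\<Sum>w\<in>\<Union>?M. degree E w) = (\<Sum>w\<in>?X. degree E w) + (\<Sum>w\<in>\<Union>M. degree E w)"
          unfolding UM by (rule sum.union_disjoint) (use U finU in auto)
        also have "(\<Sum>w\<in>?X. degree E w) = degree E u + degree E v" using unv by simp
        also have "\<dots> = \<tau> u + \<tau> v" using True v tv by simp
        also have "(\<Sum>w\<in>\<Union>M. degree E w) \<le> (\<Sum>w\<in>?V'. \<tau> w)" by (rule acc[OF sg U MD(4) MD(5)])
        also have "\<tau> u + \<tau> v = (\<Sum>w\<in>?X. \<tau> w)" using unv by simp
        also have "(\<Sum>w\<in>?X. \<tau> w) + (\<Sum>w\<in>?V'. \<tau> w) = (\<Sum>w\<in>V. \<tau> w)"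
          using sum.subset_diff[OF _ fin, of ?X \<tau>] uV v(1) by (simp add: add.commute)
        finally have s: "(\<Sum>w\<in>\<Union>?M. degree E w) \<le> (\<Sum>w\<in>V. \<tau> w)" by simp
        have inv: "\<forall>w\<in>\<Union>?M. 1 \<le> \<tau> w"
        proof
          fix w assume w: "w \<in> \<Union>?M"
          show "1 \<le> \<tau> w"
          proof (cases "w \<in> ?X")
            case True thus ?thesis using t1 uV v(1) by auto
          next
            case False
            hence "w \<in> \<Union>M" using w by auto
            hence "1 \<le> ?t' w" using MD(5) by auto
            thus ?thesis by linarith
          qed
        qed
        show ?thesis
          by (rule exI[of _ ?M], rule exI[of _ ?D]) (use mat dyn cM cD MD(3) s inv in auto)
      next
        case False
        hence tu: "\<tau> u < degree E u" using thr uV by (meson le_neq_implies_less)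
        let ?X = "{v}"
        let ?V' = "V - ?X" let ?E' = "del E ?X"
        have lt: "card ?V' < card V" using v fin by (meson card_Diff1_less)
        have f': "forest ?V' ?E'" by (rule forest_del[OF f])
        have thr': "\<forall>w\<in>?V'. \<tau> w \<le> degree ?E' w"
        proof
          fix w assume w: "w \<in> ?V'"
          hence dw: "degree E w = degree ?E' w + cX E ?X w" using degree_del[OF sg] by auto
          show "\<tau> w \<le> degree ?E' w"
          proof (cases "w = u")
            case True thus ?thesis using dw tu cX_le1[of E v w] by simp
          next
            case False thus ?thesis using dw thr w cX_leaf[OF Nv False] by auto
          qed
        qed
        obtain M D where MD: "matching ?E' M" "is_dynamo ?V' ?E' \<tau> D" "card D \<le> card M"
          "(\<Sum>w\<in>\<Union>M. degree ?E' w) \<le> (\<Sum>v\<in>?V'. \<tau> v)" "\<forall>w\<in>\<Union>M. 1 \<le> \<tau> w"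
          using less.hyps[OF lt f' thr'] by blast
        have DV: "D \<subseteq> ?V'" using MD(2) unfolding is_dynamo_def by auto
        have V'R: "?V' \<subseteq> R V E \<tau> D"
          by (rule sim[OF sg del_sub Diff_subset MD(2) order_refl, of "{}"]) auto
        have uR: "u \<in> R V E \<tau> D" using V'R uV unv by auto
        have "{u} \<subseteq> {x \<in> R V E \<tau> D. {x,v} \<in> E}" using uR uv by auto
        hence "card {u} \<le> card {x \<in> R V E \<tau> D. {x,v} \<in> E}" by (intro card_mono nbrs_fin2[OF sg])
        hence "\<tau> v \<le> card {x \<in> R V E \<tau> D. {x,v} \<in> E}" using tv by simp
        hence vR: "v \<in> R V E \<tau> D" using R_closed[OF sg v(1)] by auto
        hence VR: "V \<subseteq> R V E \<tau> D" using V'R by auto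
        have dyn: "is_dynamo V E \<tau> D" by (rule R_dynamo[OF sg _ VR]) (use DV in auto)
        have U: "\<Union>M \<subseteq> ?V'" by (rule matching_Union[OF sg MD(1)])
        have finU: "finite (\<Union>M)" using finite_subset[OF U] fin by auto
        have "(\<Sum>w\<in>\<Union>M. degree E w) = (\<Sum>w\<in>\<Union>M. degree ?E' w + cX E ?X w)"
        proof (rule sum.cong[OF refl])
          fix w assume "w \<in> \<Union>M"
          hence "w \<notin> ?X" using U by auto
          thus "degree E w = degree ?E' w + cX E ?X w" by (rule degree_del[OF sg])
        qed
        also have "\<dots> = (\<Sum>w\<in>\<Union>M. degree ?E' w) + (\<Sum>w\<in>\<Union>M. cX E ?X w)" by (rule sum.distrib)
        also have "(\<Sum>w\<in>\<Union>M. cX E ?X w) \<le> (\<Sum>w\<in>\<Union>M. if w = u then 1 else 0)"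
        proof (rule sum_mono)
          fix w show "cX E ?X w \<le> (if w = u then 1 else 0)"
            using cX_le1[of E v w] cX_leaf[OF Nv, of w] by auto
        qed
        also have "(\<Sum>w\<in>\<Union>M. if w = u then 1 else 0) \<le> (1::nat)"
          using finU by simp
        also have "(\<Sum>w\<in>\<Union>M. degree ?E' w) \<le> (\<Sum>v\<in>?V'. \<tau> v)" by (rule MD(4))
        also have "(\<Sum>v\<in>?V'. \<tau> v) + 1 = (\<Sum>w\<in>V. \<tau> w)"
          using sum.remove[OF fin v(1), of \<tau>] tv by simp
        finally have s: "(\<Sum>w\<in>\<Union>M. degree E w) \<le> (\<Sum>w\<in>V. \<tau> w)" by simp
        show ?thesis
          by (rule exI[of _ M], rule exI[of _ D]) (use matching_del[OF MD(1)] dyn MD(3) s MD(5) in auto)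
      qed
    qed
  qed
qed



lemma stuck:
  assumes sg: "simple_graph V E" and x: "\<tau> x = degree E x" and yT: "y \<notin> T" and xy: "{y,x} \<in> E" and xT: "x \<notin> T"
  shows "x \<notin> spread_step V E \<tau> T"
proof
  assume "x \<in> spread_step V E \<tau> T"
  hence le: "\<tau> x \<le> card {u\<in>T. {u,x} \<in> E}" using xT spread_cases by metis
  have sub: "{u\<in>T. {u,x} \<in> E} \<subseteq> {u. {u,x} \<in> E}" by auto
  have "card {u. {u,x} \<in> E} \<le> card {u\<in>T. {u,x} \<in> E}" using le x unfolding degree_def by simp
  hence "{u\<in>T. {u,x} \<in> E} = {u. {u,x} \<in> E}" by (rule card_seteq[OF nbrs_fin[OF sg] sub])
  moreover have "y \<in> {u. {u,x} \<in> E}" using xy by simp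
  ultimately show False using yT by auto
qed

lemma LB:
  assumes sg: "simple_graph V E" and m: "matching E M"
  and d: "is_dynamo V E (\<lambda>w. if w \<in> \<Union>M then degree E w else 0) D"
  shows "card M \<le> card D"
proof -
  let ?t = "\<lambda>w. if w \<in> \<Union>M then degree E w else 0"
  have DV: "D \<subseteq> V" using d unfolding is_dynamo_def by auto
  obtain K where K: "Sk V E ?t D K = V" using d unfolding is_dynamo_def by auto
  have hit: "e \<inter> D \<noteq> {}" if e: "e \<in> M" for e
  proof
    assume eD: "e \<inter> D = {}"
    have "e \<in> E" using e m unfolding matching_def by auto
    then obtain a b where ab: "e = {a,b}" "a \<noteq> b" "a \<in> V" "b \<in> V" using sg unfolding simple_graph_def by meson
    have ta: "?t a = degree E a" and tb: "?t b = degree E b" using e ab by auto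
    have ba: "{b,a} \<in> E" and abE: "{a,b} \<in> E" using \<open>e \<in> E\<close> ab by (auto simp: insert_commute)
    have "a \<notin> Sk V E ?t D k \<and> b \<notin> Sk V E ?t D k" for k
    proof (induction k)
      case 0 thus ?case using eD ab by auto
    next
      case (Suc k)
      have "a \<notin> spread_step V E ?t (Sk V E ?t D k)"
        by (rule stuck[where \<tau>="?t" and x=a and y=b, OF sg ta _ ba]) (use Suc in auto)
      moreover have "b \<notin> spread_step V E ?t (Sk V E ?t D k)"
        by (rule stuck[where \<tau>="?t" and x=b and y=a, OF sg tb _ abE]) (use Suc in auto)
      ultimately show ?case by simp
    qed
    thus False using K ab by blast
  qed
  define f where "f e = (SOME x. x \<in> e \<inter> D)" for e
  have fe: "f e \<in> e \<inter> D" if "e \<in> M" for e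
    unfolding f_def using hit[OF that] by (metis all_not_in_conv someI_ex)
  have inj: "inj_on f M"
  proof (rule inj_onI)
    fix e1 e2 assume e1: "e1 \<in> M" and e2: "e2 \<in> M" and eq: "f e1 = f e2"
    show "e1 = e2"
    proof (rule ccontr)
      assume "e1 \<noteq> e2"
      hence "e1 \<inter> e2 = {}" using m e1 e2 unfolding matching_def by auto
      thus False using fe[OF e1] fe[OF e2] eq by auto
    qed
  qed
  have "f ` M \<subseteq> D" using fe by auto
  moreover have "finite D" using finite_subset[OF DV] sg unfolding simple_graph_def by auto
  ultimately show ?thesis using card_inj_on_le[OF inj] by auto
qed

lemma V_dynamo: "simple_graph V E \<Longrightarrow> is_dynamo V E \<tau> V"
  unfolding is_dynamo_def by (auto intro: exI[of _ 0])

lemma dyn_props: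
  assumes sg: "simple_graph V E"
  shows "dyn V E \<tau> \<le> card V" "\<And>D. is_dynamo V E \<tau> D \<Longrightarrow> dyn V E \<tau> \<le> card D"
    "\<And>n. (\<And>D. is_dynamo V E \<tau> D \<Longrightarrow> n \<le> card D) \<Longrightarrow> n \<le> dyn V E \<tau>"
proof -
  let ?S = "{card D | D. is_dynamo V E \<tau> D}"
  have fin: "finite V" using sg unfolding simple_graph_def by auto
  have sub: "?S \<subseteq> {..card V}"
  proof
    fix n assume "n \<in> ?S"
    then obtain D where "n = card D" "is_dynamo V E \<tau> D" by auto
    thus "n \<in> {..card V}" using card_mono[OF fin] unfolding is_dynamo_def by auto
  qed
  have finS: "finite ?S" using finite_subset[OF sub] by auto
  have inS: "card V \<in> ?S" using V_dynamo[OF sg] by auto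
  show "dyn V E \<tau> \<le> card V" unfolding dyn_def using Min_le[OF finS inS] .
  show "\<And>D. is_dynamo V E \<tau> D \<Longrightarrow> dyn V E \<tau> \<le> card D"
    unfolding dyn_def using finS by (intro Min_le) auto
  fix n assume h: "\<And>D. is_dynamo V E \<tau> D \<Longrightarrow> n \<le> card D"
  show "n \<le> dyn V E \<tau>" unfolding dyn_def using finS inS h by (subst Min_ge_iff) auto
qed



lemma avg_le:
  assumes fin: "finite V" and a: "avg_threshold V \<tau> \<le> t" and t: "t > 0"
  shows "real (\<Sum>v\<in>V. \<tau> v) \<le> t * real (card V)"
proof (cases "card V = 0")
  case True
  hence "V = {}" using fin by auto
  thus ?thesis by simp
next
  case False
  hence "real (card V) > 0" by simp
  thus ?thesis using a unfolding avg_threshold_def by (simp add: pos_divide_le_eq)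
qed

theorem proposition6:
  fixes V :: "'a set" and E :: "'a set set" and t :: real
  assumes "forest V E" and "t > 0"
  shows "\<exists>M. matching E M \<and>
     (let \<tau> = (\<lambda>w. if w \<in> \<Union>M then degree E w else 0) in
        avg_threshold V \<tau> \<le> t \<and> Ldyn V E t = dyn V E \<tau> \<and> dyn V E \<tau> = card M)"
proof -
  have f: "forest V E" using assms by auto
  have sg: "simple_graph V E" using f unfolding forest_def by auto
  have fin: "finite V" using sg unfolding simple_graph_def by auto
  have finE: "finite E" using sg_finE[OF sg] .
  define B where "B = t * real (card V)"
  have B0: "B \<ge> 0" using assms(2) unfolding B_def by simp
  define MM where "MM = {M. matching E M \<and> real (\<Sum>w\<in>\<Union>M. degree E w) \<le> B}"
  have MMsub: "MM \<subseteq> Pow E" unfolding MM_def matching_def by auto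
  have finMM: "finite MM" using finite_subset[OF MMsub] finE by auto
  have emp: "{} \<in> MM" unfolding MM_def matching_def using B0 by auto
  let ?m = "Max (card ` MM)"
  have "?m \<in> card ` MM" using finMM emp by (intro Max_in) auto
  then obtain Ms where Ms: "Ms \<in> MM" "card Ms = ?m" by auto
  have maxM: "card M \<le> card Ms" if "M \<in> MM" for M
    using Ms(2) finMM that by (metis Max_ge finite_imageI imageI)
  have mat: "matching E Ms" and sB: "real (\<Sum>w\<in>\<Union>Ms. degree E w) \<le> B" using Ms(1) unfolding MM_def by auto
  define ts where "ts = (\<lambda>w. if w \<in> \<Union>Ms then degree E w else 0)"
  have UV: "\<Union>Ms \<subseteq> V" using matching_Union[OF sg, of "{}" Ms] mat
    unfolding del_def matching_def by auto
  have sumts: "(\<Sum>v\<in>V. ts v) = (\<Sum>w\<in>\<Union>Ms. degree E w)"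
  proof -
    have "(\<Sum>v\<in>V. ts v) = sum (degree E) (V \<inter> \<Union>Ms)"
      unfolding ts_def by (rule sum.inter_restrict[OF fin, symmetric])
    also have "V \<inter> \<Union>Ms = \<Union>Ms" using UV by auto
    finally show ?thesis .
  qed
  have avg: "avg_threshold V ts \<le> t"
  proof (cases "card V = 0")
    case True thus ?thesis unfolding avg_threshold_def using assms(2) by simp
  next
    case False
    hence "real (card V) > 0" by simp
    thus ?thesis unfolding avg_threshold_def using sB sumts unfolding B_def
      by (simp add: pos_divide_le_eq)
  qed
  have thrts: "threshold_assignment V E ts" unfolding threshold_assignment_def ts_def by auto
  have lower: "card Ms \<le> dyn V E ts"
    by (rule dyn_props(3)[OF sg]) (use LB[OF sg mat] in \<open>auto simp: ts_def\<close>)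
  let ?LS = "{dyn V E \<tau> | \<tau>. threshold_assignment V E \<tau> \<and> avg_threshold V \<tau> \<le> t}"
  have LSsub: "?LS \<subseteq> {..card V}" using dyn_props(1)[OF sg] by auto
  have finLS: "finite ?LS" using finite_subset[OF LSsub] by auto
  have inLS: "dyn V E ts \<in> ?LS" using thrts avg by auto
  have bound: "n \<le> card Ms" if n: "n \<in> ?LS" for n
  proof -
    obtain \<tau> where tau: "n = dyn V E \<tau>" "threshold_assignment V E \<tau>" "avg_threshold V \<tau> \<le> t"
      using n by auto
    have "\<forall>v\<in>V. \<tau> v \<le> degree E v" using tau(2) unfolding threshold_assignment_def .
    then obtain M D where MD: "matching E M" "is_dynamo V E \<tau> D" "card D \<le> card M"
      "(\<Sum>w\<in>\<Union>M. degree E w) \<le> (\<Sum>v\<in>V. \<tau> v)"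
      using UB[OF f] by blast
    have "real (\<Sum>v\<in>V. \<tau> v) \<le> B" unfolding B_def by (rule avg_le[OF fin tau(3) assms(2)])
    hence "real (\<Sum>w\<in>\<Union>M. degree E w) \<le> B" using MD(4) by (meson of_nat_le_iff order_trans)
    hence "M \<in> MM" unfolding MM_def using MD(1) by auto
    hence "card M \<le> card Ms" by (rule maxM)
    moreover have "dyn V E \<tau> \<le> card D" by (rule dyn_props(2)[OF sg MD(2)])
    ultimately show ?thesis using tau(1) MD(3) by linarith
  qed
  have L1: "Ldyn V E t \<le> card Ms" unfolding Ldyn_def using finLS inLS bound by (subst Max_le_iff) auto
  have L2: "dyn V E ts \<le> Ldyn V E t" unfolding Ldyn_def using finLS inLS by (rule Max_ge)
  have "matching E Ms \<and> avg_threshold V ts \<le> t \<and> Ldyn V E t = dyn V E ts \<and> dyn V E ts = card Ms"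
    using mat avg L1 L2 lower by linarith
  thus ?thesis unfolding Let_def ts_def by blast
qed


end
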